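(* Let $\Delta^m$ be the last matrix produced by the Incremental Sweeping Algorithm applied to a connection matrix $\Delta\in\mathbb F^{m\times m}$. For every $j$, if the $j$-th column of $\Delta^m$ is nonzero then the $j$-th row of $\Delta^m$ is zero; equivalently $\Delta^m_{\cdot j}\,\Delta^m_{j\cdot}=0$ (outer product) for all $j$.
   Context: Throughout, $\mathbb F$ is a field and $m\ge1$. $A_{i\cdot}$, $A_{\cdot j}$ denote the $i$-th row and $j$-th column of a matrix $A$. $U^{pq}$ is the $m\times m$ matrix whose only nonzero entry is a $1$ in position $(p,q)$. Superscripts on matrices are indices, not powers. A connection matrix (over $\mathbb F$) is a matrix $\Delta\in\mathbb F^{m\times m}$ together with a partition $\{1,\dots,m\}=J_0\sqcup\cdots\sqcup J_b$ (the column/row partition; the $J_k$ need not consist of consecutive integers) such that $\Delta$ is upper triangular, $\Delta\Delta=0$, and $\Delta_{ij}=0$ unless $i<j$ and $(i,j)\in\bigcup_{k=1}^bJ_{k-1}\times J_k$. For $1\le r\le m-1$ the $r$-th diagonal is $\{(j-r,j):r<j\le m\}$. Incremental Sweeping Algorithm (ISA) applied to a connection matrix $\Delta$: set $\Delta^0=\Delta^1=\Delta$. For $r=1,\dots,m-1$ in turn: (Markup) for every position $(j-r,j)$ on the $r$-th diagonal with $\Delta^r_{j-r,j}\ne0$ such that no position in column $j$ was marked as a primary pivot at an earlier iteration: if some position $(j-r,p)$ of row $j-r$ was marked as a primary pivot at an earlier iteration, mark $(j-r,j)$ as a change-of-basis pivot of iteration $r$; otherwise mark $(j-r,j)$ permanently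 as a primary pivot. (Update) Let $T^r=I-\sum \frac{\Delta^r_{j-r,j}}{\Delta^r_{j-r,p}}U^{pj}$, the sum running over all change-of-basis pivots $(j-r,j)$ of iteration $r$, where $(j-r,p)$ is the primary pivot position in row $j-r$; set $\Delta^{r+1}=(T^r)^{-1}\Delta^rT^r$. *)

theory Defs
  imports "Jordan_Normal_Form.Matrix"
begin

text \<open>Matrices are m x m matrices of the Jordan_Normal_Form library; indices are
  0-based (index i here corresponds to index i+1 in the paper).\<close>

definition connection_matrix ::
  "nat \<Rightarrow> 'a::field mat \<Rightarrow> nat \<Rightarrow> (nat \<Rightarrow> nat set) \<Rightarrow> bool" where
  "connection_matrix m D b J \<longleftrightarrow>
     D \<in> carrier_mat m m \<and>
     (\<Union>k\<in>{0..b}. J k) = {..<m} \<and>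
     (\<forall>k\<in>{0..b}. \<forall>l\<in>{0..b}. k \<noteq> l \<longrightarrow> J k \<inter> J l = {}) \<and>
     (\<forall>i<m. \<forall>j<m. j < i \<longrightarrow> D $$ (i, j) = 0) \<and>
     D * D = 0\<^sub>m m m \<and>
     (\<forall>i<m. \<forall>j<m. D $$ (i, j) \<noteq> 0 \<longrightarrow>
        i < j \<and> (\<exists>k\<in>{1..b}. i \<in> J (k - 1) \<and> j \<in> J k))"

definition unit_mat :: "nat \<Rightarrow> nat \<Rightarrow> nat \<Rightarrow> 'a::field mat" where
  "unit_mat m p q = mat m m (\<lambda>(a, c). if a = p \<and> c = q then 1 else 0)"

definition inv_mat :: "nat \<Rightarrow> 'a::field mat \<Rightarrow> 'a mat" where
  "inv_mat m T = (THE S. S \<in> carrier_mat m m \<and> S * T = 1\<^sub>m m \<and> T * S = 1\<^sub>m m)"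

text \<open>Markup of iteration r, given the current matrix D = Delta^r and the set P of
  positions marked as primary pivots at earlier iterations.
  Change-of-basis pivots of iteration r:\<close>
definition cob_pivots :: "nat \<Rightarrow> nat \<Rightarrow> 'a::field mat \<Rightarrow> (nat \<times> nat) set \<Rightarrow> (nat \<times> nat) set" where
  "cob_pivots m r D P = {(j - r, j) | j. r \<le> j \<and> j < m \<and> D $$ (j - r, j) \<noteq> 0 \<and>
       (\<forall>i. (i, j) \<notin> P) \<and> (\<exists>p. (j - r, p) \<in> P)}"

definition new_primary :: "nat \<Rightarrow> nat \<Rightarrow> 'a::field mat \<Rightarrow> (nat \<times> nat) set \<Rightarrow> (nat \<times> nat) set" where
  "new_primary m r D P = {(j - r, j) | j. r \<le> j \<and> j < m \<and> D $$ (j - r, j) \<noteq> 0 \<and>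
       (\<forall>i. (i, j) \<notin> P) \<and> \<not> (\<exists>p. (j - r, p) \<in> P)}"

definition prim_col :: "(nat \<times> nat) set \<Rightarrow> nat \<Rightarrow> nat" where
  "prim_col P i = (THE p. (i, p) \<in> P)"

definition isa_T :: "nat \<Rightarrow> nat \<Rightarrow> 'a::field mat \<Rightarrow> (nat \<times> nat) set \<Rightarrow> 'a mat" where
  "isa_T m r D P = 1\<^sub>m m -
     mat m m (\<lambda>e. \<Sum>x\<in>cob_pivots m r D P.
        (D $$ x / D $$ (fst x, prim_col P (fst x))) * unit_mat m (prim_col P (fst x)) (snd x) $$ e)"

definition isa_step :: "nat \<Rightarrow> nat \<Rightarrow> 'a::field mat \<times> (nat \<times> nat) set \<Rightarrow> 'a mat \<times> (nat \<times> nat) set" where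
  "isa_step m r S = (let D = fst S; P = snd S; T = isa_T m r D P in
      (inv_mat m T * D * T, P \<union> new_primary m r D P))"

text \<open>isa_iter m D k = state after iterations 1..k; its first component is Delta^(k+1).\<close>
primrec isa_iter :: "nat \<Rightarrow> 'a::field mat \<Rightarrow> nat \<Rightarrow> 'a mat \<times> (nat \<times> nat) set" where
  "isa_iter m D 0 = (D, {})"
| "isa_iter m D (Suc k) = isa_step m (Suc k) (isa_iter m D k)"

text \<open>Delta^m, the last matrix produced by the ISA (after iterations r = 1..m-1).\<close>
definition isa_final :: "nat \<Rightarrow> 'a::field mat \<Rightarrow> 'a mat" where
  "isa_final m D = fst (isa_iter m D (m - 1))"

end

theory Submission
  imports Defs
begin

lemma mult_entry:
  fixes A B :: "'a::field mat"
  assumes "A \<in> carrier_mat m m" "B \<in> carrier_mat m m" "i < m" "j < m"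
  shows "(A*B)$$(i,j) = (\<Sum>t<m. A$$(i,t)*B$$(t,j))"
  using assms by (simp add: scalar_prod_def atLeast0LessThan)

definition inv_isa :: "nat \<Rightarrow> nat \<Rightarrow> 'a::field mat \<Rightarrow> (nat \<times> nat) set \<Rightarrow> bool" where
  "inv_isa m r D P \<longleftrightarrow> D \<in> carrier_mat m m \<and> D * D = 0\<^sub>m m m \<and>
    (\<forall>i p. (i,p) \<in> P \<longrightarrow> i < p \<and> p < m \<and> p \<le> i + r) \<and>
    (\<forall>i p q. (i,p) \<in> P \<longrightarrow> (i,q) \<in> P \<longrightarrow> p = q) \<and>
    (\<forall>i p. (i,p) \<in> P \<longrightarrow> D$$(i,p) \<noteq> 0 \<and> (\<forall>a. i < a \<longrightarrow> a < m \<longrightarrow> D$$(a,p) = 0)) \<and>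
    (\<forall>j<m. (\<forall>i. (i,j) \<notin> P) \<longrightarrow> (\<forall>a<m. j \<le> a + r \<longrightarrow> D$$(a,j) = 0))"

lemma prim_col_eq:
  assumes "(i,q) \<in> P" "\<forall>i p q. (i,p) \<in> P \<longrightarrow> (i,q) \<in> P \<longrightarrow> p = q"
  shows "prim_col P i = q"
  unfolding prim_col_def using assms by (intro the_equality) auto

lemma sum_single:
  assumes "finite S" "t0 \<in> S" "\<And>t. t \<in> S \<Longrightarrow> t \<noteq> t0 \<Longrightarrow> f t = 0"
  shows "sum f S = f t0"
proof -
  have "sum f S = f t0 + sum f (S - {t0})" using assms by (simp add: sum.remove)
  also have "sum f (S - {t0}) = 0" using assms by (intro sum.neutral) auto
  finally show ?thesis by simp
qed

lemma step_inv:
  fixes D :: "'a::field mat"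
  assumes I: "inv_isa m r D P"
  shows "inv_isa m (Suc r) (fst (isa_step m (Suc r) (D,P))) (snd (isa_step m (Suc r) (D,P)))"
proof -
  define R where "R = Suc r"
  define cob where "cob = cob_pivots m R D P"
  define new where "new = new_primary m R D P"
  define pc where "pc = prim_col P"
  define M :: "'a mat" where "M = mat m m (\<lambda>e. \<Sum>x\<in>cob.
        (D $$ x / D $$ (fst x, pc (fst x))) * unit_mat m (pc (fst x)) (snd x) $$ e)"
  have T: "isa_T m R D P = 1\<^sub>m m - M" unfolding isa_T_def M_def cob_def pc_def ..
  have Dc: "D \<in> carrier_mat m m" and DD: "D * D = 0\<^sub>m m m"
    and Pb: "\<And>i p. (i,p) \<in> P \<Longrightarrow> i < p \<and> p < m \<and> p \<le> i + r"
    and Pu: "\<forall>i p q. (i,p) \<in> P \<longrightarrow> (i,q) \<in> P \<longrightarrow> p = q"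
    and Pl: "\<And>i p. (i,p) \<in> P \<Longrightarrow> D$$(i,p) \<noteq> 0 \<and> (\<forall>a. i < a \<longrightarrow> a < m \<longrightarrow> D$$(a,p) = 0)"
    and Pz: "\<And>j a. j < m \<Longrightarrow> (\<forall>i. (i,j) \<notin> P) \<Longrightarrow> a < m \<Longrightarrow> j \<le> a + r \<Longrightarrow> D$$(a,j) = 0"
    using I unfolding inv_isa_def by blast+
  have cob_iff: "\<And>i j. (i,j) \<in> cob \<longleftrightarrow> R \<le> j \<and> j < m \<and> i = j - R \<and> D$$(i,j) \<noteq> 0 \<and>
      (\<forall>i'. (i',j) \<notin> P) \<and> (\<exists>p. (i,p) \<in> P)"
    unfolding cob_def cob_pivots_def by auto
  have new_iff: "\<And>i j. (i,j) \<in> new \<longleftrightarrow> R \<le> j \<and> j < m \<and> i = j - R \<and> D$$(i,j) \<noteq> 0 \<and>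
      (\<forall>i'. (i',j) \<notin> P) \<and> \<not> (\<exists>p. (i,p) \<in> P)"
    unfolding new_def new_primary_def by auto
  have cobP: "(i, pc i) \<in> P" if "(i,j) \<in> cob" for i j
  proof -
    from that obtain p where "(i,p) \<in> P" using cob_iff by blast
    with Pu show ?thesis unfolding pc_def using prim_col_eq by metis
  qed
  have cob_lt: "pc i < j" if "(i,j) \<in> cob" for i j
    using Pb[OF cobP[OF that]] that cob_iff unfolding R_def by auto
  have fin: "finite cob"
  proof (rule finite_subset)
    show "cob \<subseteq> (\<lambda>j. (j - R, j)) ` {..<m}" using cob_iff by auto
  qed auto
  have Mc: "M \<in> carrier_mat m m" unfolding M_def by simp
  have Mentry: "M$$(a,b) = (if (b-R,b) \<in> cob \<and> a = pc (b-R)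
      then D$$(b-R,b) / D$$(b-R, pc (b-R)) else 0)" if "a < m" "b < m" for a b
  proof -
    have "M$$(a,b) = (\<Sum>x\<in>cob. (D $$ x / D $$ (fst x, pc (fst x))) *
        (if a = pc (fst x) \<and> b = snd x then 1 else 0))"
      unfolding M_def unit_mat_def using that by simp
    also have "\<dots> = (\<Sum>x\<in>cob. if x = (b-R,b) then (if a = pc (b-R)
      then D$$(b-R,b) / D$$(b-R, pc (b-R)) else 0) else 0)"
    proof (rule sum.cong)
      fix x assume "x \<in> cob"
      then obtain i j where x: "x = (i,j)" "(i,j) \<in> cob" by (cases x) auto
      then show "(D $$ x / D $$ (fst x, pc (fst x))) *
        (if a = pc (fst x) \<and> b = snd x then 1 else 0) = (if x = (b-R,b) then (if a = pc (b-R)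
      then D$$(b-R,b) / D$$(b-R, pc (b-R)) else 0) else 0)"
        using cob_iff[of i j] by auto
    qed simp
    also have "\<dots> = (if (b-R,b) \<in> cob \<and> a = pc (b-R)
      then D$$(b-R,b) / D$$(b-R, pc (b-R)) else 0)"
      using fin by (simp add: sum.delta)
    finally show ?thesis .
  qed
  have Mnz: "(b-R,b) \<in> cob \<and> a = pc (b-R)" if "a < m" "b < m" "M$$(a,b) \<noteq> 0" for a b
    using Mentry[OF that(1,2)] that(3) by (auto split: if_splits)
  have MM: "M * M = 0\<^sub>m m m"
  proof (rule eq_matI)
    fix a b assume ab: "a < dim_row (0\<^sub>m m m :: 'a mat)" "b < dim_col (0\<^sub>m m m :: 'a mat)"
    have "(M*M)$$(a,b) = (\<Sum>t<m. M$$(a,t)*M$$(t,b))" using ab by (intro mult_entry[OF Mc Mc]) auto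
    also have "\<dots> = 0"
    proof (rule sum.neutral, rule ballI)
      fix t assume t: "t \<in> {..<m}"
      show "M$$(a,t)*M$$(t,b) = 0"
      proof (rule ccontr)
        assume "M$$(a,t)*M$$(t,b) \<noteq> 0"
        then have h1: "M$$(a,t) \<noteq> 0" and h2: "M$$(t,b) \<noteq> 0" by auto
        from Mnz[OF _ _ h1] ab t have "(t-R,t) \<in> cob" by auto
        then have "\<forall>i'. (i',t) \<notin> P" using cob_iff by blast
        moreover from Mnz[OF _ _ h2] ab t have "(b-R,b) \<in> cob" "t = pc (b-R)" by auto
        then have "(b-R, t) \<in> P" using cobP by blast
        ultimately show False by blast
      qed
    qed
    finally show "(M*M)$$(a,b) = 0\<^sub>m m m $$ (a,b)" using ab by simp
  qed (use Mc in auto)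
  have one1: "(1\<^sub>m m + M) * (1\<^sub>m m - M) = 1\<^sub>m m"
  proof -
    have "(1\<^sub>m m + M) * (1\<^sub>m m - M) = 1\<^sub>m m * (1\<^sub>m m - M) + M * (1\<^sub>m m - M)"
      using Mc by (intro add_mult_distrib_mat) auto
    also have "M * (1\<^sub>m m - M) = M * 1\<^sub>m m - M * M"
      using Mc by (intro mult_minus_distrib_mat) auto
    finally show ?thesis using Mc MM by (intro eq_matI) auto
  qed
  have one2: "(1\<^sub>m m - M) * (1\<^sub>m m + M) = 1\<^sub>m m"
  proof -
    have "(1\<^sub>m m - M) * (1\<^sub>m m + M) = 1\<^sub>m m * (1\<^sub>m m + M) - M * (1\<^sub>m m + M)"
      using Mc by (intro minus_mult_distrib_mat) auto
    also have "M * (1\<^sub>m m + M) = M * 1\<^sub>m m + M * M"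
      using Mc by (intro mult_add_distrib_mat) auto
    finally show ?thesis using Mc MM by (intro eq_matI) auto
  qed
  have invT: "inv_mat m (1\<^sub>m m - M) = 1\<^sub>m m + M"
    unfolding inv_mat_def
  proof (rule the_equality)
    show "1\<^sub>m m + M \<in> carrier_mat m m \<and> (1\<^sub>m m + M) * (1\<^sub>m m - M) = 1\<^sub>m m \<and>
      (1\<^sub>m m - M) * (1\<^sub>m m + M) = 1\<^sub>m m" using one1 one2 Mc by auto
  next
    fix S :: "'a mat" assume S: "S \<in> carrier_mat m m \<and> S * (1\<^sub>m m - M) = 1\<^sub>m m \<and> (1\<^sub>m m - M) * S = 1\<^sub>m m"
    have "S = S * ((1\<^sub>m m - M) * (1\<^sub>m m + M))" using one2 S right_mult_one_mat[of S m m] by auto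
    also have "\<dots> = (S * (1\<^sub>m m - M)) * (1\<^sub>m m + M)" using S Mc by (subst assoc_mult_mat) auto
    also have "\<dots> = 1\<^sub>m m + M" using S Mc by simp
    finally show "S = 1\<^sub>m m + M" .
  qed
  define E where "E = D * (1\<^sub>m m - M)"
  have Ec: "E \<in> carrier_mat m m" unfolding E_def using Dc Mc by auto
  have D'eq: "fst (isa_step m (Suc r) (D,P)) = (1\<^sub>m m + M) * E"
  proof -
    have T': "isa_T m (Suc r) D P = 1\<^sub>m m - M" using T R_def by simp
    show ?thesis unfolding isa_step_def Let_def fst_conv snd_conv T' invT E_def
      using Dc Mc by (subst assoc_mult_mat) auto
  qed
  have P'eq: "snd (isa_step m (Suc r) (D,P)) = P \<union> new"
    unfolding isa_step_def Let_def R_def[symmetric] new_def by simp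

  have D1: "1\<^sub>m m - M \<in> carrier_mat m m" and D2: "1\<^sub>m m + M \<in> carrier_mat m m" using Mc by auto
  have Eentry: "E$$(a,k) = (if (k-R,k) \<in> cob then D$$(a,k) - D$$(a, pc (k-R)) *
      (D$$(k-R,k) / D$$(k-R, pc (k-R))) else D$$(a,k))" if ak: "a < m" "k < m" for a k
  proof -
    have "E = D * 1\<^sub>m m - D * M" unfolding E_def using Dc Mc by (intro mult_minus_distrib_mat) auto
    then have "E$$(a,k) = D$$(a,k) - (D*M)$$(a,k)" using ak Dc Mc by simp
    also have "(D*M)$$(a,k) = (\<Sum>t<m. D$$(a,t)*M$$(t,k))" by (rule mult_entry[OF Dc Mc ak])
    also have "\<dots> = (if (k-R,k) \<in> cob then D$$(a, pc (k-R)) *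
      (D$$(k-R,k) / D$$(k-R, pc (k-R))) else 0)"
    proof (cases "(k-R,k) \<in> cob")
      case True
      have q: "pc (k-R) < m" using Pb[OF cobP[OF True]] by auto
      have "(\<Sum>t<m. D$$(a,t)*M$$(t,k)) = D$$(a,pc (k-R))*M$$(pc (k-R),k)"
        by (rule sum_single) (use q ak Mentry in auto)
      then show ?thesis using True Mentry[OF q ak(2)] by simp
    next
      case False
      then show ?thesis using Mentry ak by (simp)
    qed
    finally show ?thesis by auto
  qed
  have K: "((1\<^sub>m m + M) * E)$$(a,k) = E$$(a,k)"
    if ak: "a < m" "k < m" and z: "\<And>t. t < m \<Longrightarrow> a < t \<Longrightarrow> E$$(t,k) = 0" for a k
  proof -
    have "(1\<^sub>m m + M) * E = 1\<^sub>m m * E + M * E" using Mc Ec by (intro add_mult_distrib_mat) auto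
    then have "((1\<^sub>m m + M) * E)$$(a,k) = E$$(a,k) + (M*E)$$(a,k)" using ak Ec Mc by simp
    also have "(M*E)$$(a,k) = (\<Sum>t<m. M$$(a,t)*E$$(t,k))" by (rule mult_entry[OF Mc Ec ak])
    also have "\<dots> = 0"
    proof (rule sum.neutral, rule ballI)
      fix t assume t: "t \<in> {..<m}"
      show "M$$(a,t)*E$$(t,k) = 0"
      proof (cases "M$$(a,t) = 0")
        case False
        with Mnz ak t have "(t-R,t) \<in> cob" "a = pc (t-R)" by auto
        then have "a < t" using cob_lt by blast
        then show ?thesis using z t by auto
      qed simp
    qed
    finally show ?thesis by simp
  qed
  have DD': "((1\<^sub>m m + M) * E) * ((1\<^sub>m m + M) * E) = 0\<^sub>m m m"
  proof -
    have X: "(1\<^sub>m m + M) * E \<in> carrier_mat m m" using D2 Ec by auto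
    have "E * ((1\<^sub>m m + M) * E) = D * ((1\<^sub>m m - M) * ((1\<^sub>m m + M) * E))"
      using assoc_mult_mat[OF Dc D1 X] by (simp only: E_def[symmetric])
    also have "(1\<^sub>m m - M) * ((1\<^sub>m m + M) * E) = ((1\<^sub>m m - M) * (1\<^sub>m m + M)) * E"
      by (rule assoc_mult_mat[OF D1 D2 Ec, symmetric])
    also have "\<dots> = E" using one2 Ec by simp
    also have "D * E = (D * D) * (1\<^sub>m m - M)" unfolding E_def by (rule assoc_mult_mat[OF Dc Dc D1, symmetric])
    also have "\<dots> = 0\<^sub>m m m" using DD D1 left_mult_zero_mat[OF D1] by simp
    finally have "E * ((1\<^sub>m m + M) * E) = 0\<^sub>m m m" .
    moreover have "((1\<^sub>m m + M) * E) * ((1\<^sub>m m + M) * E) = (1\<^sub>m m + M) * (E * ((1\<^sub>m m + M) * E))"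
      by (rule assoc_mult_mat[OF D2 Ec X])
    ultimately show ?thesis using D2 right_mult_zero_mat[OF D2] by simp
  qed
  have notcob_piv: "(k-R,k) \<notin> cob" if "(i,k) \<in> P \<union> new" for i k
  proof
    assume c: "(k-R,k) \<in> cob"
    then have nP: "\<forall>i'. (i',k) \<notin> P" and hp: "\<exists>p. (k-R,p) \<in> P" using cob_iff[of "k-R" k] by auto
    show False
    proof (cases "(i,k) \<in> P")
      case True with nP show False by blast
    next
      case False
      then have "(i,k) \<in> new" using that by blast
      then have "i = k - R" "\<not> (\<exists>p. (i,p) \<in> P)" using new_iff[of i k] by auto
      with hp show False by simp
    qed
  qed
  have piv: "D$$(i,p) \<noteq> 0 \<and> (\<forall>a. i < a \<longrightarrow> a < m \<longrightarrow> D$$(a,p) = 0)" and pm: "p < m"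
    if "(i,p) \<in> P \<union> new" for i p
  proof -
    show "p < m" using that Pb new_iff[of i p] by auto
    show "D$$(i,p) \<noteq> 0 \<and> (\<forall>a. i < a \<longrightarrow> a < m \<longrightarrow> D$$(a,p) = 0)"
    proof (cases "(i,p) \<in> P")
      case True then show ?thesis using Pl by blast
    next
      case False
      then have n: "(i,p) \<in> new" using that by blast
      then have "R \<le> p" "p < m" "i = p - R" "D$$(i,p) \<noteq> 0" "\<forall>i'. (i',p) \<notin> P"
        using new_iff by blast+
      then show ?thesis using Pz unfolding R_def by auto
    qed
  qed
  have piv': "((1\<^sub>m m + M) * E)$$(i,p) \<noteq> 0 \<and> (\<forall>a. i < a \<longrightarrow> a < m \<longrightarrow> ((1\<^sub>m m + M) * E)$$(a,p) = 0)"
    if ip: "(i,p) \<in> P \<union> new" for i p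
  proof -
    have p: "p < m" using pm[OF ip] .
    have Ep: "E$$(a,p) = D$$(a,p)" if "a < m" for a using Eentry[OF that p] notcob_piv[OF ip] by simp
    have im: "i < m" using ip Pb[of i p] new_iff[of i p] by auto
    have eq: "((1\<^sub>m m + M) * E)$$(a,p) = D$$(a,p)" if "a < m" "i \<le> a" for a
      using K[OF that(1) p] Ep piv[OF ip] that by auto
    show ?thesis using eq[OF im] eq piv[OF ip] by auto
  qed
  have zc: "((1\<^sub>m m + M) * E)$$(a,j) = 0"
    if j: "j < m" "\<forall>i. (i,j) \<notin> P \<union> new" and a: "a < m" "j \<le> a + Suc r" for j a
  proof -
    have Ez: "E$$(t,j) = 0" if t: "t < m" "j \<le> t + Suc r" for t
    proof (cases "(j-R,j) \<in> cob")
      case True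
      then have c: "R \<le> j" "(j-R, pc (j-R)) \<in> P" "\<forall>i'. (i',j) \<notin> P" using cob_iff cobP by blast+
      show ?thesis
      proof (cases "t = j - R")
        case True
        then show ?thesis using Eentry[OF t(1) j(1)] `(j-R,j) \<in> cob` Pl[OF c(2)] by simp
      next
        case False
        then have "j - R < t" using t c unfolding R_def by auto
        then show ?thesis using Eentry[OF t(1) j(1)] `(j-R,j) \<in> cob` Pl[OF c(2)]
            Pz[OF j(1) c(3) t(1)] t(1) c(1) unfolding R_def by auto
      qed
    next
      case False
      have nP: "\<forall>i. (i,j) \<notin> P" using j by blast
      show ?thesis
      proof (cases "j \<le> t + r")
        case True then show ?thesis using Eentry[OF t(1) j(1)] False Pz[OF j(1) nP t(1)] by simp
      next
        case nt: False
        then have tj: "t = j - R" "R \<le> j" using t unfolding R_def by auto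
        have "D$$(t,j) = 0"
        proof (rule ccontr)
          assume "D$$(t,j) \<noteq> 0"
          then have "(t,j) \<in> cob \<or> (t,j) \<in> new" using cob_iff[of t j] new_iff[of t j] tj nP j by auto
          then show False using False j tj by blast
        qed
        then show ?thesis using Eentry[OF t(1) j(1)] False by simp
      qed
    qed
    show ?thesis using K[OF a(1) j(1)] Ez[OF a] Ez a by auto
  qed
  have h3: "\<forall>i p. (i,p) \<in> P \<union> new \<longrightarrow> i < p \<and> p < m \<and> p \<le> i + Suc r"
  proof (intro allI impI)
    fix i p assume "(i,p) \<in> P \<union> new"
    then show "i < p \<and> p < m \<and> p \<le> i + Suc r"
    proof
      assume "(i,p) \<in> P" then show ?thesis using Pb[of i p] by auto
    next
      assume "(i,p) \<in> new" then show ?thesis using new_iff[of i p] unfolding R_def by auto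
    qed
  qed
  have h4: "\<forall>i p q. (i,p) \<in> P \<union> new \<longrightarrow> (i,q) \<in> P \<union> new \<longrightarrow> p = q"
  proof (intro allI impI)
    fix i p q assume "(i,p) \<in> P \<union> new" "(i,q) \<in> P \<union> new"
    then show "p = q" using Pu new_iff[of i p] new_iff[of i q] by auto
  qed
  have h5: "\<forall>i p. (i,p) \<in> P \<union> new \<longrightarrow> ((1\<^sub>m m + M) * E)$$(i,p) \<noteq> 0 \<and>
      (\<forall>a. i < a \<longrightarrow> a < m \<longrightarrow> ((1\<^sub>m m + M) * E)$$(a,p) = 0)"
    using piv' by blast
  have h6: "\<forall>j<m. (\<forall>i. (i,j) \<notin> P \<union> new) \<longrightarrow> (\<forall>a<m. j \<le> a + Suc r \<longrightarrow> ((1\<^sub>m m + M) * E)$$(a,j) = 0)"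
    using zc by blast
  have h1: "(1\<^sub>m m + M) * E \<in> carrier_mat m m" using D2 Ec by auto
  have "inv_isa m (Suc r) ((1\<^sub>m m + M) * E) (P \<union> new)"
    unfolding inv_isa_def using h1 DD' h3 h4 h5 h6 by blast
  then show ?thesis using D'eq P'eq by simp
qed

lemma base_inv:
  fixes D :: "'a::field mat"
  assumes "connection_matrix m D b J"
  shows "inv_isa m 0 D {}"
proof -
  have Dc: "D \<in> carrier_mat m m" and DD: "D * D = 0\<^sub>m m m"
    and low: "\<forall>i<m. \<forall>j<m. j < i \<longrightarrow> D $$ (i, j) = 0"
    and nz: "\<forall>i<m. \<forall>j<m. D $$ (i, j) \<noteq> 0 \<longrightarrow> i < j \<and> (\<exists>k\<in>{1..b}. i \<in> J (k - 1) \<and> j \<in> J k)"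
    using assms unfolding connection_matrix_def by blast+
  have "D$$(a,j) = 0" if "j < m" "a < m" "j \<le> a" for a j
  proof (rule ccontr)
    assume "D$$(a,j) \<noteq> 0"
    then have "a < j" using nz that by blast
    then show False using that by simp
  qed
  then show ?thesis unfolding inv_isa_def using Dc DD by auto
qed

lemma iter_inv:
  fixes D :: "'a::field mat"
  assumes "connection_matrix m D b J"
  shows "inv_isa m k (fst (isa_iter m D k)) (snd (isa_iter m D k))"
proof (induction k)
  case 0 then show ?case using base_inv[OF assms] by simp
next
  case (Suc k)
  have "isa_iter m D (Suc k) = isa_step m (Suc k) (fst (isa_iter m D k), snd (isa_iter m D k))" by simp
  then show ?case using step_inv[OF Suc.IH] by simp
qed

theorem mainTheorem4:
  fixes D :: "'a::field mat" and m b :: nat and J :: "nat \<Rightarrow> nat set"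
  assumes "m \<ge> 1"
    and "connection_matrix m D b J"
  shows "\<forall>j<m. col (isa_final m D) j \<noteq> 0\<^sub>v m \<longrightarrow> row (isa_final m D) j = 0\<^sub>v m"
proof (intro allI impI)
  define E where "E = isa_final m D"
  define P where "P = snd (isa_iter m D (m - 1))"
  have I: "inv_isa m (m - 1) E P" unfolding E_def P_def isa_final_def by (rule iter_inv[OF assms(2)])
  have Ec: "E \<in> carrier_mat m m" and EE: "E * E = 0\<^sub>m m m"
    and Pb: "\<And>i p. (i,p) \<in> P \<Longrightarrow> i < p \<and> p < m \<and> p \<le> i + (m - 1)"
    and Pu: "\<And>i p q. (i,p) \<in> P \<Longrightarrow> (i,q) \<in> P \<Longrightarrow> p = q"
    and Pl: "\<And>i p. (i,p) \<in> P \<Longrightarrow> E$$(i,p) \<noteq> 0 \<and> (\<forall>a. i < a \<longrightarrow> a < m \<longrightarrow> E$$(a,p) = 0)"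
    and Pz: "\<And>j a. j < m \<Longrightarrow> (\<forall>i. (i,j) \<notin> P) \<Longrightarrow> a < m \<Longrightarrow> j \<le> a + (m - 1) \<Longrightarrow> E$$(a,j) = 0"
    using I unfolding inv_isa_def by blast+
  have Z: "E$$(a,j) = 0" if "j < m" "a < m" "\<forall>i. (i,j) \<notin> P" for a j
    using Pz[OF that(1) that(3) that(2)] that by auto
  fix j assume j: "j < m" and cj: "col (isa_final m D) j \<noteq> 0\<^sub>v m"
  have "\<exists>i. (i,j) \<in> P"
  proof (rule ccontr)
    assume "\<not> (\<exists>i. (i,j) \<in> P)"
    then have "col E j = 0\<^sub>v m" using Ec j Z by (intro eq_vecI) auto
    then show False using cj E_def by simp
  qed
  then obtain i where ij: "(i,j) \<in> P" by blast
  show "row (isa_final m D) j = 0\<^sub>v m"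
    unfolding E_def[symmetric]
  proof (rule eq_vecI)
    fix k assume "k < dim_vec (0\<^sub>v m :: 'a vec)"
    then have k: "k < m" by simp
    have "E$$(j,k) = 0"
    proof (rule ccontr)
      assume ne: "E$$(j,k) \<noteq> 0"
      define S where "S = {x. x \<in> P \<and> E$$(snd x, k) \<noteq> 0}"
      have Ssub: "S \<subseteq> {..<m} \<times> {..<m}" unfolding S_def using Pb by force
      have finS: "finite S" by (rule finite_subset[OF Ssub]) auto
      have iS: "(i,j) \<in> S" unfolding S_def using ij ne by simp
      define l0 where "l0 = Max (fst ` S)"
      have "l0 \<in> fst ` S" unfolding l0_def using finS iS by (intro Max_in) auto
      then obtain t0 where t0S: "(l0,t0) \<in> S" by force
      have l0max: "l \<le> l0" if "(l,t) \<in> S" for l t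
        unfolding l0_def using finS that by (intro Max_ge) force+
      have t0P: "(l0,t0) \<in> P" and t0k: "E$$(t0,k) \<noteq> 0" using t0S unfolding S_def by auto
      have l0m: "l0 < m" and t0m: "t0 < m" using Pb[OF t0P] by auto
      have "(E*E)$$(l0,k) = (\<Sum>t<m. E$$(l0,t)*E$$(t,k))" by (rule mult_entry[OF Ec Ec l0m k])
      also have "\<dots> = E$$(l0,t0)*E$$(t0,k)"
      proof (rule sum_single)
        fix t assume t: "t \<in> {..<m}" "t \<noteq> t0"
        show "E$$(l0,t)*E$$(t,k) = 0"
        proof (cases "E$$(t,k) = 0")
          case False
          show ?thesis
          proof (cases "\<exists>l. (l,t) \<in> P")
            case True
            then obtain l where lt: "(l,t) \<in> P" by blast
            then have "(l,t) \<in> S" using False unfolding S_def by simp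
            then have "l \<le> l0" by (rule l0max)
            moreover have "l \<noteq> l0" using Pu[OF lt] t0P t by blast
            ultimately have "l < l0" by simp
            then show ?thesis using Pl[OF lt] l0m by simp
          next
            case False
            then show ?thesis using Z[of t l0] t l0m by auto
          qed
        qed simp
      qed (use t0m in auto)
      finally have "(E*E)$$(l0,k) = E$$(l0,t0)*E$$(t0,k)" .
      moreover have "(E*E)$$(l0,k) = 0" using EE l0m k by simp
      moreover have "E$$(l0,t0) \<noteq> 0" using Pl[OF t0P] by blast
      ultimately show False using t0k by simp
    qed
    then show "row E j $ k = 0\<^sub>v m $ k" using Ec j k by simp
  qed (use Ec in simp)
qed

end
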